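(* Fix $0<q<1$. For $t_0>\log(1/q)$ and $\varepsilon>0$ define $$\omega^*(\varepsilon;t_0)=\sup\{|T_q(G')-t_0|:\ G\in\mathcal G,\ T_q(G)=t_0,\ \|G-G'\|\le\varepsilon\},$$ the supremum being over such $G$ and cdfs $G'$. Then for each fixed $t_0>\log(1/q)$, $$\omega^*(\varepsilon;t_0)\le\frac{q}{\log(1/q)}\,t_0e^{t_0}\,\varepsilon\,(1+o(1))\quad\text{as }\varepsilon\to0.$$
   Context: $E(t)=1-e^{-t}$, $\bar E=1-E$, $\bar G=1-G$. $\mathcal G=\{E\#F:F$ a probability distribution on $[1,\infty)\}$ with $(E\#F)(t)=\int E(t/\mu)\,dF(\mu)$. FDR functional $T_q(G)=\inf\{t:\bar G(t)\ge\frac1q\bar E(t)\}$ for any cdf $G$. $\|G-G'\|=\sup_t|G(t)-G'(t)|$ (Kolmogorov–Smirnov distance). *)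

theory Defs
  imports "HOL-Probability.Probability"
begin

definition Ecdf :: "real \<Rightarrow> real" where
  "Ecdf t = (if t < 0 then 0 else 1 - exp (- t))"

definition is_cdf :: "(real \<Rightarrow> real) \<Rightarrow> bool" where
  "is_cdf G \<longleftrightarrow> mono G \<and> (\<forall>x. continuous (at_right x) G)
     \<and> (G \<longlongrightarrow> 0) at_bot \<and> (G \<longlongrightarrow> 1) at_top"

definition mixE :: "real measure \<Rightarrow> real \<Rightarrow> real" where
  "mixE F t = (\<integral>\<mu>. Ecdf (t / \<mu>) \<partial>F)"

definition mixClass :: "(real \<Rightarrow> real) set" where
  "mixClass = {mixE F | F. prob_space F \<and> sets F = sets borel \<and> measure F {1..} = 1}"

text \<open>FDR functional T_q(G) = inf{t : 1 - G t \<ge> (1 - E t)/q} (infimum of the empty set is \<infinity>).\<close>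
definition Tq :: "real \<Rightarrow> (real \<Rightarrow> real) \<Rightarrow> ereal" where
  "Tq q G = Inf {ereal t | t. 1 - G t \<ge> (1 - Ecdf t) / q}"

definition ks_dist :: "(real \<Rightarrow> real) \<Rightarrow> (real \<Rightarrow> real) \<Rightarrow> ereal" where
  "ks_dist G G' = (SUP t. ereal \<bar>G t - G' t\<bar>)"

definition omega_star :: "real \<Rightarrow> real \<Rightarrow> real \<Rightarrow> ereal" where
  "omega_star q eps t0 = Sup {\<bar>Tq q G' - ereal t0\<bar> | G G'.
      G \<in> mixClass \<and> Tq q G = ereal t0 \<and> is_cdf G' \<and> ks_dist G G' \<le> ereal eps}"

end

theory Submission
  imports Defs
begin

lemma P1:
  fixes a t t0 :: real
  assumes "0 \<le> a" "a \<le> 1" "t \<le> t0"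
  shows "exp (t0 * a) * (1 - (t0 - t)) \<le> exp (t * a)"
proof -
  have e: "exp (t * a) = exp (t0 * a) * exp (- ((t0 - t) * a))"
    unfolding exp_add[symmetric] by (rule arg_cong[where f=exp]) (simp add: algebra_simps)
  have "1 - (t0 - t) \<le> 1 - (t0 - t) * a"
    using assms mult_left_le[of a "t0 - t"] by simp
  also have "\<dots> \<le> exp (- ((t0 - t) * a))"
    using exp_ge_add_one_self[of "- ((t0 - t) * a)"] by simp
  finally show ?thesis unfolding e by (intro mult_left_mono) auto
qed

lemma P2:
  fixes a t t0 :: real
  assumes "0 \<le> a" "a \<le> 1" "t0 \<le> t"
  shows "exp (t * a) \<le> exp (t0 * a) * exp (t - t0)"
proof -
  have e: "exp (t0 * a) * exp (t - t0) = exp (t0 * a + (t - t0))"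
    by (simp add: mult_exp_exp)
  have "t * a \<le> t0 * a + (t - t0)"
  proof -
    have "(t - t0) * a \<le> t - t0" using assms mult_left_le[of a "t - t0"] by simp
    moreover have "t * a = t0 * a + (t - t0) * a" by (simp add: algebra_simps)
    ultimately show ?thesis by simp
  qed
  then show ?thesis unfolding e by simp
qed

lemma xlnx:
  fixes y m :: real
  assumes "0 < y" "0 < m"
  shows "m * ln m + (ln m + 1) * (y - m) \<le> y * ln y"
proof -
  have "ln (m / y) \<le> m / y - 1" using assms by (intro ln_le_minus_one) auto
  then have "y * ln (m / y) \<le> y * (m / y - 1)" using assms by (intro mult_left_mono) auto
  moreover have "y * (m / y - 1) = m - y" using assms by (simp add: field_simps)
  moreover have "ln (m / y) = ln m - ln y" using assms by (simp add: ln_div)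
  ultimately have "y * (ln m - ln y) \<le> m - y" by simp
  then show ?thesis by (simp add: algebra_simps)
qed

lemma P3:
  fixes a s t0 m :: real
  assumes "0 \<le> a" "a \<le> 1" "t0 \<le> s" "0 < t0" "0 < m"
  shows "exp (t0 * a) + (s - t0) / t0 * (m * ln m + (ln m + 1) * (exp (t0 * a) - m))
         \<le> exp (s * a)"
proof -
  define Y where "Y = exp (t0 * a)"
  have Y: "0 < Y" "ln Y = t0 * a" unfolding Y_def by auto
  have "m * ln m + (ln m + 1) * (Y - m) \<le> Y * ln Y" using xlnx[OF Y(1) assms(5)] .
  then have "(s - t0) / t0 * (m * ln m + (ln m + 1) * (Y - m)) \<le> (s - t0) / t0 * (Y * ln Y)"
    using assms by (intro mult_left_mono) auto
  also have "\<dots> = Y * ((s - t0) * a)" using Y assms by (simp add: field_simps)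
  finally have 1: "Y + (s - t0) / t0 * (m * ln m + (ln m + 1) * (Y - m)) \<le> Y * (1 + (s - t0) * a)"
    by (simp add: algebra_simps)
  have "Y * (1 + (s - t0) * a) \<le> Y * exp ((s - t0) * a)"
    using Y exp_ge_add_one_self[of "(s - t0) * a"] by (intro mult_left_mono) (auto simp: add.commute)
  also have "\<dots> = exp (s * a)" unfolding Y_def exp_add[symmetric]
    by (rule arg_cong[where f=exp]) (simp add: algebra_simps)
  finally show ?thesis using 1 unfolding Y_def by linarith
qed

lemma P4:
  fixes u p c :: real
  assumes "0 \<le> p" "p \<le> 1"
  shows "exp (p * u) \<le> exp (p * c) * (1 - p) + p * exp (p * c - c) * exp u"
proof -
  have "exp ((1 - p) *\<^sub>R 0 + p *\<^sub>R (u - c)) \<le> (1 - p) * exp 0 + p * exp (u - c)"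
    using assms by (intro convex_onD[OF exp_convex]) auto
  then have 1: "exp (p * (u - c)) \<le> (1 - p) + p * exp (u - c)" by simp
  have "exp (p * u) = exp (p * c) * exp (p * (u - c))"
    by (simp add: mult_exp_exp algebra_simps)
  also have "\<dots> \<le> exp (p * c) * ((1 - p) + p * exp (u - c))"
    using 1 by (intro mult_left_mono) auto
  also have "\<dots> = exp (p * c) * (1 - p) + p * exp (p * c - c) * exp u"
    by (simp add: algebra_simps mult_exp_exp[symmetric] exp_diff)
  finally show ?thesis .
qed

lemma key:
  fixes F :: "real measure" and q t0 :: real
  assumes F: "prob_space F" "sets F = sets borel" "measure F {1..} = 1"
    and q: "0 < q" "q < 1" and t0: "0 < t0" and T: "Tq q (mixE F) = ereal t0"
  shows "(\<forall>s\<ge>t0. exp (- s) * (1 / q + (s - t0) * ln (1 / q) / (q * t0)) \<le> 1 - mixE F s)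
       \<and> (\<forall>t. 0 \<le> t \<and> t \<le> t0 \<longrightarrow> 1 - mixE F t \<le> exp (- t) * exp (t * ln (1 / q) / t0))
       \<and> (\<forall>t. 0 \<le> mixE F t)"
proof -
  interpret prob_space F by fact
  have meas: "f \<in> borel_measurable borel \<Longrightarrow> f \<in> borel_measurable F" for f :: "real \<Rightarrow> real"
    using measurable_cong_sets[OF F(2) refl, of "borel :: real measure"] by simp
  have AE1: "AE \<mu> in F. 1 \<le> \<mu>"
    using AE_prob_1[OF F(3)] by simp
  define a where "a \<mu> = 1 - 1 / \<mu>" for \<mu> :: real
  have AEa: "AE \<mu> in F. 0 \<le> a \<mu> \<and> a \<mu> \<le> 1"
    using AE1 by eventually_elim (auto simp: a_def)
  have ma: "(\<lambda>\<mu>. exp (t * a \<mu>)) \<in> borel_measurable F" for t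
    unfolding a_def by (intro meas) measurable
  have int: "integrable F (\<lambda>\<mu>. exp (t * a \<mu>))" if "0 \<le> t" for t
  proof (rule integrable_const_bound[where B = "exp t"])
    show "AE \<mu> in F. norm (exp (t * a \<mu>)) \<le> exp t"
      using AEa by eventually_elim (use that in \<open>auto simp: mult_left_le\<close>)
  qed (rule ma)
  define phi where "phi t = (\<integral>\<mu>. exp (t * a \<mu>) \<partial>F)" for t
  have Gexp: "1 - mixE F t = exp (- t) * phi t" if "0 \<le> t" for t
  proof -
    have mE: "(\<lambda>\<mu>. Ecdf (t / \<mu>)) \<in> borel_measurable F"
      unfolding Ecdf_def by (intro meas) measurable
    have "mixE F t = (\<integral>\<mu>. 1 - exp (- t) * exp (t * a \<mu>) \<partial>F)"
      unfolding mixE_def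
    proof (rule integral_cong_AE)
      show "(\<lambda>\<mu>. 1 - exp (- t) * exp (t * a \<mu>)) \<in> borel_measurable F"
        using ma by measurable
      show "AE \<mu> in F. Ecdf (t / \<mu>) = 1 - exp (- t) * exp (t * a \<mu>)"
        using AE1
      proof eventually_elim
        case (elim \<mu>)
        have "exp (- t) * exp (t * a \<mu>) = exp (- (t / \<mu>))"
          unfolding exp_add[symmetric] using elim
          by (intro arg_cong[where f=exp]) (simp add: a_def field_simps)
        moreover have "0 \<le> t / \<mu>" using elim that by simp
        ultimately show ?case by (simp add: Ecdf_def)
      qed
    qed (rule mE)
    also have "\<dots> = 1 - exp (- t) * phi t"
      using int[OF that] by (simp add: phi_def prob_space)
    finally show ?thesis by simp
  qed
  have nonneg: "0 \<le> mixE F t" for t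
    unfolding mixE_def by (intro integral_nonneg_AE) (auto simp: Ecdf_def)
  have phi_ge1: "1 \<le> phi t" if "0 \<le> t" for t
  proof -
    have "(\<integral>\<mu>. 1 \<partial>F) \<le> phi t"
      unfolding phi_def
      by (rule integral_mono_AE) (use int[OF that] AEa that in \<open>auto elim!: eventually_mono\<close>)
    then show ?thesis by (simp add: prob_space)
  qed
  define S where "S = {ereal t | t. (1 - Ecdf t) / q \<le> 1 - mixE F t}"
  have TS: "Tq q (mixE F) = Inf S" unfolding Tq_def S_def by simp
  have memS: "ereal t \<in> S \<longleftrightarrow> 1 / q \<le> phi t" if "0 \<le> t" for t
  proof -
    have "ereal t \<in> S \<longleftrightarrow> (1 - Ecdf t) / q \<le> 1 - mixE F t" unfolding S_def by auto
    also have "\<dots> \<longleftrightarrow> exp (- t) * (1 / q) \<le> exp (- t) * phi t"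
    proof -
      have e: "(1 - Ecdf t) / q = exp (- t) * (1 / q)" using that by (simp add: Ecdf_def)
      show ?thesis unfolding e Gexp[OF that] ..
    qed
    also have "\<dots> \<longleftrightarrow> 1 / q \<le> phi t" by (rule mult_le_cancel_left_pos) simp
    finally show ?thesis .
  qed
  have lowS: "t0 \<le> t" if "ereal t \<in> S" for t
  proof -
    have "ereal t0 \<le> ereal t" using Inf_lower[OF that] T TS by simp
    then show ?thesis by simp
  qed
  define m where "m = phi t0"
  have m1: "1 \<le> m" using phi_ge1 t0 by (simp add: m_def)
  have mle: "m \<le> 1 / q"
  proof (rule ccontr)
    assume "\<not> m \<le> 1 / q"
    then have mg: "1 / q < m" by simp
    define \<eta> where "\<eta> = min (t0 / 2) ((m - 1 / q) / m)"
    have e1: "\<eta> \<le> t0 / 2" unfolding \<eta>_def by (rule min.cobounded1)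
    have e2: "\<eta> \<le> (m - 1 / q) / m" unfolding \<eta>_def by (rule min.cobounded2)
    have e0: "0 < \<eta>" using mg m1 t0 unfolding \<eta>_def by auto
    note \<eta> = e0 e1 e2
    have "(\<integral>\<mu>. exp (t0 * a \<mu>) * (1 - (t0 - (t0 - \<eta>))) \<partial>F) \<le> phi (t0 - \<eta>)"
      unfolding phi_def
    proof (rule integral_mono_AE)
      show "AE \<mu> in F. exp (t0 * a \<mu>) * (1 - (t0 - (t0 - \<eta>))) \<le> exp ((t0 - \<eta>) * a \<mu>)"
        using AEa
      proof eventually_elim
        case (elim \<mu>) then show ?case using \<eta> by (intro P1) auto
      qed
    qed (use int[of t0] int[of "t0 - \<eta>"] t0 \<eta> in auto)
    then have "m * (1 - \<eta>) \<le> phi (t0 - \<eta>)" by (simp add: m_def phi_def)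
    moreover have "1 / q \<le> m * (1 - \<eta>)"
    proof -
      have "m * \<eta> \<le> m - 1 / q" using \<eta>(3) m1 by (simp add: field_simps)
      then show ?thesis by (simp add: algebra_simps)
    qed
    ultimately have "ereal (t0 - \<eta>) \<in> S" using memS[of "t0 - \<eta>"] \<eta> by simp
    from lowS[OF this] \<eta> show False by simp
  qed
  have mge: "1 / q \<le> m"
  proof (rule ccontr)
    assume "\<not> 1 / q \<le> m"
    then have ml: "m < 1 / q" by simp
    define \<eta> where "\<eta> = ln (1 / (q * m)) / 2"
    have "1 < 1 / (q * m)" using ml q m1 by (simp add: field_simps)
    then have lpos: "0 < ln (1 / (q * m))" by (rule ln_gt_zero)
    then have \<eta>: "0 < \<eta>" "\<eta> < ln (1 / (q * m))" by (auto simp: \<eta>_def)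
    have "exp \<eta> < exp (ln (1 / (q * m)))" using \<eta>(2) by simp
    also have "\<dots> = 1 / (q * m)" using q m1 by simp
    finally have "exp \<eta> < 1 / (q * m)" .
    then have e\<eta>: "exp \<eta> * m < 1 / q" using q m1 by (simp add: field_simps)
    have "ereal (t0 + \<eta>) \<le> Inf S"
    proof (rule Inf_greatest)
      fix x assume "x \<in> S"
      then obtain t where x: "x = ereal t" and tS: "ereal t \<in> S" unfolding S_def by auto
      have tt0: "t0 \<le> t" using lowS[OF tS] .
      show "ereal (t0 + \<eta>) \<le> x"
      proof (rule ccontr)
        assume "\<not> ereal (t0 + \<eta>) \<le> x"
        then have tl: "t < t0 + \<eta>" using x by simp
        have "phi t \<le> (\<integral>\<mu>. exp (t0 * a \<mu>) * exp (t - t0) \<partial>F)"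
          unfolding phi_def
        proof (rule integral_mono_AE)
          show "AE \<mu> in F. exp (t * a \<mu>) \<le> exp (t0 * a \<mu>) * exp (t - t0)"
            using AEa
          proof eventually_elim
            case (elim \<mu>) then show ?case using tt0 by (intro P2) auto
          qed
        qed (use int[of t0] int[of t] t0 tt0 in auto)
        also have "\<dots> = m * exp (t - t0)" by (simp add: m_def phi_def)
        also have "\<dots> \<le> m * exp \<eta>" using tl m1 by (intro mult_left_mono) auto
        finally have "phi t < 1 / q" using e\<eta> by (simp add: mult.commute)
        then show False using memS[of t] tS tt0 t0 by simp
      qed
    qed
    then show False using T TS \<eta> by simp
  qed
  have m: "m = 1 / q" using mle mge by simp
  have mpos: "0 < m" using m1 by simp
  have L: "ln m = ln (1 / q)" using m by simp
  have up: "exp (- s) * (1 / q + (s - t0) * ln (1 / q) / (q * t0)) \<le> 1 - mixE F s" if "t0 \<le> s" for s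
  proof -
    have "(\<integral>\<mu>. exp (t0 * a \<mu>) + (s - t0) / t0 * (m * ln m + (ln m + 1) * (exp (t0 * a \<mu>) - m)) \<partial>F)
          \<le> phi s"
      unfolding phi_def
    proof (rule integral_mono_AE)
      show "AE \<mu> in F. exp (t0 * a \<mu>) + (s - t0) / t0 * (m * ln m + (ln m + 1) * (exp (t0 * a \<mu>) - m)) \<le> exp (s * a \<mu>)"
        using AEa
      proof eventually_elim
        case (elim \<mu>) then show ?case using that t0 mpos by (intro P3) auto
      qed
    qed (use int[of t0] int[of s] t0 that in auto)
    then have "m + (s - t0) / t0 * (m * ln m) \<le> phi s"
      using int[of t0] t0 by (simp add: m_def[symmetric] phi_def[symmetric] prob_space algebra_simps)
    then have "1 / q + (s - t0) * ln (1 / q) / (q * t0) \<le> phi s"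
      using L m by (simp add: field_simps)
    then show ?thesis using Gexp[of s] that t0 by (simp add: mult_left_mono)
  qed
  have low: "1 - mixE F t \<le> exp (- t) * exp (t * ln (1 / q) / t0)" if "0 \<le> t" "t \<le> t0" for t
  proof -
    define p where "p = t / t0"
    have p: "0 \<le> p" "p \<le> 1" using that t0 by (auto simp: p_def)
    have "phi t \<le> (\<integral>\<mu>. exp (p * ln m) * (1 - p) + p * exp (p * ln m - ln m) * exp (t0 * a \<mu>) \<partial>F)"
      unfolding phi_def
    proof (rule integral_mono_AE)
      show "AE \<mu> in F. exp (t * a \<mu>) \<le> exp (p * ln m) * (1 - p) + p * exp (p * ln m - ln m) * exp (t0 * a \<mu>)"
      proof (rule AE_I2)
        fix \<mu>
        have "exp (t * a \<mu>) = exp (p * (t0 * a \<mu>))" using t0 by (simp add: p_def)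
        also have "\<dots> \<le> exp (p * ln m) * (1 - p) + p * exp (p * ln m - ln m) * exp (t0 * a \<mu>)"
          by (rule P4[OF p])
        finally show "exp (t * a \<mu>) \<le> exp (p * ln m) * (1 - p) + p * exp (p * ln m - ln m) * exp (t0 * a \<mu>)" .
      qed
    qed (use int[of t0] int[of t] that t0 in auto)
    also have "\<dots> = exp (p * ln m)"
      using int[of t0] t0 mpos
      by (simp add: m_def[symmetric] phi_def[symmetric] prob_space exp_diff field_simps)
    also have "\<dots> = exp (t * ln (1 / q) / t0)" using L by (simp add: p_def)
    finally show ?thesis using Gexp[of t] that by (simp add: mult_left_mono)
  qed
  show ?thesis using up low nonneg by blast
qed

lemma step:
  fixes q t0 \<delta> eps :: real
  assumes q: "0 < q" "q < 1" and t0: "0 < t0" and L: "0 < ln (1 / q)" and \<delta>: "0 < \<delta>"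
    and e0: "0 < eps"
    and e1: "(1 + \<delta>) * (q * t0 * exp t0 / ln (1 / q)) * eps \<le> ln (1 + \<delta>)"
    and e2: "eps < 1 / q - 1"
    and e3: "(1 + \<delta>) * q * exp t0 * eps < \<delta>"
  shows "omega_star q eps t0 \<le> ereal ((1 + \<delta>) * (q / ln (1 / q)) * t0 * exp t0 * eps)"
proof -
  define K where "K = q * t0 * exp t0 / ln (1 / q)"
  define B where "B = (1 + \<delta>) * K * eps"
  have Kpos: "0 < K" using q t0 L by (simp add: K_def)
  have Bpos: "0 < B" using Kpos \<delta> e0 by (simp add: B_def)
  have Beq: "(1 + \<delta>) * (q / ln (1 / q)) * t0 * exp t0 * eps = B"
    by (simp add: B_def K_def field_simps)
  have BL: "B * ln (1 / q) / (q * t0) = (1 + \<delta>) * exp t0 * eps"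
    using q t0 L by (simp add: B_def K_def field_simps)
  have Bln: "B \<le> ln (1 + \<delta>)" using e1 by (simp add: B_def K_def)
  show ?thesis unfolding omega_star_def Beq
  proof (rule Sup_least)
    fix x assume "x \<in> {\<bar>Tq q G' - ereal t0\<bar> | G G'.
      G \<in> mixClass \<and> Tq q G = ereal t0 \<and> is_cdf G' \<and> ks_dist G G' \<le> ereal eps}"
    then obtain G G' where x: "x = \<bar>Tq q G' - ereal t0\<bar>" and G: "G \<in> mixClass"
      and TG: "Tq q G = ereal t0" and ks: "ks_dist G G' \<le> ereal eps" by blast
    from G obtain F where F: "prob_space F" "sets F = sets borel" "measure F {1..} = 1"
      and GF: "G = mixE F" unfolding mixClass_def by blast
    have K1: "\<forall>s\<ge>t0. exp (- s) * (1 / q + (s - t0) * ln (1 / q) / (q * t0)) \<le> 1 - G s"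
      and K2: "\<forall>t. 0 \<le> t \<and> t \<le> t0 \<longrightarrow> 1 - G t \<le> exp (- t) * exp (t * ln (1 / q) / t0)"
      and K3: "\<forall>t. 0 \<le> G t"
      using key[OF F q t0 TG[unfolded GF]] unfolding GF by blast+
    have dist: "\<bar>G t - G' t\<bar> \<le> eps" for t
    proof -
      have "ereal \<bar>G t - G' t\<bar> \<le> ks_dist G G'" unfolding ks_dist_def by (rule SUP_upper) simp
      then have "ereal \<bar>G t - G' t\<bar> \<le> ereal eps" using ks by (rule order_trans)
      then show ?thesis by simp
    qed
    define S where "S = {ereal t | t. (1 - Ecdf t) / q \<le> 1 - G' t}"
    have TS: "Tq q G' = Inf S" unfolding Tq_def S_def by simp
    define s where "s = t0 + B"
    have sS: "ereal s \<in> S"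
    proof -
      have s0: "t0 \<le> s" using Bpos by (simp add: s_def)
      have E: "1 - Ecdf s = exp (- s)" using s0 t0 by (simp add: Ecdf_def)
      have "exp (- s) * (1 / q + (s - t0) * ln (1 / q) / (q * t0)) \<le> 1 - G s" using K1 s0 by blast
      then have 1: "exp (- s) / q + exp (- s) * ((1 + \<delta>) * exp t0 * eps) \<le> 1 - G s"
        using BL by (simp add: s_def algebra_simps)
      have "exp B \<le> 1 + \<delta>" using Bln \<delta> by (metis exp_le_cancel_iff exp_ln add_pos_pos zero_less_one)
      then have "1 \<le> exp (- B) * (1 + \<delta>)" by (simp add: exp_minus field_simps)
      also have "exp (- B) = exp (- s) * exp t0" by (simp add: s_def exp_add[symmetric])
      finally have "eps \<le> exp (- s) * ((1 + \<delta>) * exp t0 * eps)"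
        using e0 mult_right_mono[of 1 "exp (- s) * exp t0 * (1 + \<delta>)" eps] by (simp add: algebra_simps)
      then have "exp (- s) / q \<le> 1 - G s - eps" using 1 by linarith
      also have "\<dots> \<le> 1 - G' s" using dist[of s] by linarith
      finally have "(1 - Ecdf s) / q \<le> 1 - G' s" using E by simp
      then show ?thesis unfolding S_def by blast
    qed
    have up: "Tq q G' \<le> ereal (t0 + B)" unfolding TS using Inf_lower[OF sS] by (simp add: s_def)
    have low: "ereal (t0 - B) \<le> Tq q G'" unfolding TS
    proof (rule Inf_greatest)
      fix y assume "y \<in> S"
      then obtain t where y: "y = ereal t" and c: "(1 - Ecdf t) / q \<le> 1 - G' t" unfolding S_def by blast
      show "ereal (t0 - B) \<le> y"
      proof (rule ccontr)
        assume "\<not> ereal (t0 - B) \<le> y"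
        then have tl: "t < t0 - B" using y by simp
        show False
        proof (cases "t < 0")
          case True
          then have "1 / q \<le> 1 - G' t" using c by (simp add: Ecdf_def)
          also have "\<dots> \<le> 1 + eps" using abs_le_D1[OF dist[of t]] K3 spec[OF K3, of t] by linarith
          finally show False using e2 by simp
        next
          case False
          then have t: "0 \<le> t" "t \<le> t0" using tl Bpos by auto
          define w where "w = (1 + \<delta>) * q * exp t0 * eps"
          have w0: "0 < w" using q \<delta> e0 by (simp add: w_def)
          have E: "1 - Ecdf t = exp (- t)" using t by (simp add: Ecdf_def)
          have "exp (- t) / q \<le> 1 - G' t" using c E by simp
          also have "\<dots> \<le> 1 - G t + eps" using dist[of t] by linarith
          also have "\<dots> \<le> exp (- t) * exp (t * ln (1 / q) / t0) + eps" using K2 t by auto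
          finally have 2: "exp (- t) / q \<le> exp (- t) * exp (t * ln (1 / q) / t0) + eps" .
          have "exp t * (exp (- t) / q) \<le> exp t * (exp (- t) * exp (t * ln (1 / q) / t0) + eps)"
            using 2 by (intro mult_left_mono) auto
          moreover have "exp t * (exp (- t) / q) = (exp t * exp (- t)) / q" by simp
          moreover have "exp t * (exp (- t) * exp (t * ln (1 / q) / t0) + eps)
              = (exp t * exp (- t)) * exp (t * ln (1 / q) / t0) + eps * exp t" by algebra
          moreover have ee: "exp t * exp (- t) = 1" by (simp add: exp_minus_inverse)
          ultimately have 3: "1 / q \<le> exp (t * ln (1 / q) / t0) + eps * exp t"
            by (simp only: ee)
          have "w < (t0 - t) * ln (1 / q) / t0"
          proof -
            have "B * ln (1 / q) / t0 < (t0 - t) * ln (1 / q) / t0"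
              using tl L t0 by (intro divide_strict_right_mono mult_strict_right_mono) auto
            moreover have "B * ln (1 / q) / t0 = w"
              using q t0 L by (simp add: B_def K_def w_def field_simps)
            ultimately show ?thesis by simp
          qed
          then have "exp (t * ln (1 / q) / t0) < exp (ln (1 / q) - w)"
            using t0 by (simp add: field_simps)
          also have "\<dots> = (1 / q) * exp (- w)" using q by (simp add: exp_diff exp_minus field_simps)
          finally have 4: "exp (t * ln (1 / q) / t0) < (1 / q) * exp (- w)" .
          have "eps * exp t \<le> eps * exp t0" using t e0 by simp
          also have "\<dots> = (1 / q) * (w / (1 + \<delta>))"
          proof -
            have "w / (1 + \<delta>) = q * exp t0 * eps" using \<delta> unfolding w_def
              by (metis (no_types, lifting) mult.assoc nonzero_mult_div_cancel_left add_pos_pos zero_less_one less_irrefl)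
            then show ?thesis using q by simp
          qed
          finally have 5: "eps * exp t \<le> (1 / q) * (w / (1 + \<delta>))" .
          have "1 / q < (1 / q) * (exp (- w) + w / (1 + \<delta>))" using 3 4 5 by (simp add: algebra_simps)
          then have 6: "1 < exp (- w) + w / (1 + \<delta>)" using q by (simp add: field_simps)
          have "1 + w \<le> exp w" by (rule exp_ge_add_one_self)
          then have 7: "exp (- w) \<le> 1 / (1 + w)" using w0 by (simp add: exp_minus field_simps)
          have "w < \<delta>" using e3 by (simp add: w_def)
          then have 8: "w / (1 + \<delta>) \<le> w / (1 + w)" using w0 by (intro divide_left_mono) auto
          have "1 / (1 + w) + w / (1 + w) = 1" using w0 by (simp add: field_simps)
          then show False using 6 7 8 by linarith
        qed
      qed
    qed
    show "x \<le> ereal B"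
    proof (cases "Tq q G'")
      case (real r)
      then have "t0 - B \<le> r" "r \<le> t0 + B" using up low by auto
      then show ?thesis using x real by simp
    next
      case PInf then show ?thesis using up by simp
    next
      case MInf then show ?thesis using low by simp
    qed
  qed
qed

theorem lemma4p5:
  fixes q t0 :: real
  assumes "0 < q" "q < 1" "t0 > ln (1 / q)"
  shows "\<forall>\<delta>>0. \<forall>\<^sub>F eps in at_right 0.
           omega_star q eps t0 \<le> ereal ((1 + \<delta>) * (q / ln (1 / q)) * t0 * exp t0 * eps)"
proof (intro allI impI)
  fix \<delta> :: real assume \<delta>: "0 < \<delta>"
  have L: "0 < ln (1 / q)" using assms by (intro ln_gt_zero) simp
  have t0: "0 < t0" using L assms by linarith
  define K where "K = q * t0 * exp t0 / ln (1 / q)"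
  have Kpos: "0 < K" unfolding K_def using assms(1) t0 L by (intro divide_pos_pos mult_pos_pos) auto
  define c1 where "c1 = ln (1 + \<delta>) / ((1 + \<delta>) * K)"
  define c2 where "c2 = 1 / q - 1"
  define c3 where "c3 = \<delta> / ((1 + \<delta>) * q * exp t0)"
  have c1: "0 < c1" using \<delta> Kpos by (simp add: c1_def)
  have c2: "0 < c2" using assms by (simp add: c2_def)
  have c3: "0 < c3" using \<delta> assms by (simp add: c3_def)
  define c where "c = min c1 (min c2 c3)"
  have "0 < c" using c1 c2 c3 by (simp add: c_def)
  then have ev: "\<forall>\<^sub>F eps in at_right 0. eps \<in> {0<..<c}" by (rule eventually_at_right_real)
  show "\<forall>\<^sub>F eps in at_right 0.
           omega_star q eps t0 \<le> ereal ((1 + \<delta>) * (q / ln (1 / q)) * t0 * exp t0 * eps)"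
    using ev
  proof (rule eventually_mono)
    fix eps assume e: "eps \<in> {0<..<c}"
    have e0: "0 < eps" using e by simp
    have "eps < c1" "eps < c2" "eps < c3" using e by (auto simp: c_def)
    have e1: "(1 + \<delta>) * (q * t0 * exp t0 / ln (1 / q)) * eps \<le> ln (1 + \<delta>)"
    proof -
      have dpos: "0 < (1 + \<delta>) * K" using \<delta> Kpos by simp
      have "eps * ((1 + \<delta>) * K) < ln (1 + \<delta>)"
        using \<open>eps < c1\<close> pos_less_divide_eq[OF dpos] unfolding c1_def by blast
      then show ?thesis unfolding K_def[symmetric] by (simp add: algebra_simps)
    qed
    have e2: "eps < 1 / q - 1" using \<open>eps < c2\<close> by (simp add: c2_def)
    have e3: "(1 + \<delta>) * q * exp t0 * eps < \<delta>"
    proof -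
      have dpos: "0 < (1 + \<delta>) * q * exp t0" using \<delta> assms by simp
      have "eps * ((1 + \<delta>) * q * exp t0) < \<delta>"
        using \<open>eps < c3\<close> pos_less_divide_eq[OF dpos] unfolding c3_def by blast
      then show ?thesis by (simp add: algebra_simps)
    qed
    show "omega_star q eps t0 \<le> ereal ((1 + \<delta>) * (q / ln (1 / q)) * t0 * exp t0 * eps)"
      by (rule step[OF assms(1,2) t0 L \<delta> e0 e1 e2 e3])
  qed
qed

end
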